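(* Let $n\geq 2$ be an integer, and for $\alpha\in\mathbb{Q}$ let $s_{n,\alpha}=1+i\frac{\pi\alpha}{\log n}$. Then $\{\kappa_{s_{n,\alpha}}\}_{\alpha\in\mathbb{Q}}$ spans a dense subspace of $H^2$.
   Context: $H^2$ denotes the Hardy space of analytic functions $f(z)=\sum_{k\ge0}\hat f(k)z^k$ on the open unit disk with $\sum_{k}|\hat f(k)|^2<\infty$. For $s\in\mathbb{C}\setminus\{0\}$ set $\varphi_0(s)=-\frac1s$ and $\varphi_k(s)=-\frac1s\left((k+1)^{1-s}-k^{1-s}\right)$ for $k\geq1$. For $\Re s>1/2$ the zeta kernel is $\kappa_s(z)=\sum_{k=0}^\infty\varphi_k(\bar s)z^k\in H^2$; equivalently $\langle f,\kappa_s\rangle=\Lambda^{(s)}(f)$ where $\Lambda^{(s)}$ is the bounded linear functional on $H^2$ with $\Lambda^{(s)}(z^k)=\varphi_k(s)$. *)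

theory Defs
  imports "HOL-Analysis.Analysis"
begin

text \<open>H^2 is represented by the Taylor coefficient sequences f(z) = sum_k a_k z^k:
  the map f -> (hat f(k))_k is the standard isometric identification of H^2 with l^2(N).\<close>

definition H2 :: "(nat \<Rightarrow> complex) set" where
  "H2 = {a. summable (\<lambda>k. (cmod (a k))^2)}"

definition H2_norm :: "(nat \<Rightarrow> complex) \<Rightarrow> real" where
  "H2_norm a = sqrt (\<Sum>k. (cmod (a k))^2)"

definition phi :: "nat \<Rightarrow> complex \<Rightarrow> complex" where
  "phi k s = (if k = 0 then - 1 / s
              else - (1 / s) * (of_nat (k+1) powr (1 - s) - of_nat k powr (1 - s)))"

definition kappa :: "complex \<Rightarrow> nat \<Rightarrow> complex" where
  "kappa s = (\<lambda>k. phi k (cnj s))"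

definition s_param :: "nat \<Rightarrow> rat \<Rightarrow> complex" where
  "s_param n \<alpha> = 1 + \<i> * of_real (pi * of_rat \<alpha> / ln (real n))"

end

theory Submission
  imports Defs "HOL-Complex_Analysis.Complex_Analysis"
begin

definition nrm :: "(nat \<Rightarrow> complex) \<Rightarrow> real" where
  "nrm a = (\<Sum>k. (cmod (a k))^2)"

definition ip :: "(nat \<Rightarrow> complex) \<Rightarrow> (nat \<Rightarrow> complex) \<Rightarrow> complex" where
  "ip a b = (\<Sum>k. a k * cnj (b k))"

lemma H2_iff: "a \<in> H2 \<longleftrightarrow> summable (\<lambda>k. (cmod (a k))^2)"
  by (simp add: H2_def)

lemma real_sq_add_le: "((a::real) + b)^2 \<le> 2*a^2 + 2*b^2"
proof -
  have "0 \<le> (a-b)^2" by simp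
  then show ?thesis by (simp add: power2_eq_square algebra_simps)
qed

lemma real_prod_le2: "(a::real) * b * 2 \<le> a^2 + b^2"
proof -
  have "0 \<le> (a-b)^2" by simp
  then show ?thesis by (simp add: power2_eq_square algebra_simps)
qed

lemma sq_add_le: "(cmod (x + y))^2 \<le> 2 * (cmod x)^2 + 2 * (cmod y)^2"
proof -
  have "cmod (x + y) \<le> cmod x + cmod y" by (rule norm_triangle_ineq)
  then have "(cmod (x + y))^2 \<le> (cmod x + cmod y)^2"
    by (simp add: power_mono)
  also have "\<dots> \<le> 2 * (cmod x)^2 + 2 * (cmod y)^2"
    by (rule real_sq_add_le)
  finally show ?thesis .
qed

lemma H2_add: "a \<in> H2 \<Longrightarrow> b \<in> H2 \<Longrightarrow> (\<lambda>k. a k + b k) \<in> H2"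
  unfolding H2_iff
  apply (rule summable_comparison_test'[where g="\<lambda>k. 2 * (cmod (a k))^2 + 2 * (cmod (b k))^2" and N=0])
  by (auto intro!: summable_add summable_mult sq_add_le)

lemma H2_scale: "a \<in> H2 \<Longrightarrow> (\<lambda>k. c * a k) \<in> H2"
  unfolding H2_iff by (simp add: norm_mult power_mult_distrib summable_mult)

lemma H2_diff: "a \<in> H2 \<Longrightarrow> b \<in> H2 \<Longrightarrow> (\<lambda>k. a k - b k) \<in> H2"
  using H2_add[of a "\<lambda>k. (-1) * b k"] H2_scale[of b "-1"] by simp

lemma H2_zero: "(\<lambda>k. 0) \<in> H2"
  by (simp add: H2_iff)

lemma H2_sum: "finite A \<Longrightarrow> (\<And>x. x \<in> A \<Longrightarrow> v x \<in> H2) \<Longrightarrow> (\<lambda>k. \<Sum>x\<in>A. v x k) \<in> H2"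
proof (induction A rule: finite_induct)
  case empty then show ?case by (simp add: H2_zero)
next
  case (insert x F)
  then show ?case using H2_add[of "v x" "\<lambda>k. \<Sum>x\<in>F. v x k"] by simp
qed

lemma abs_prod_le2: "cmod x * cmod y * 2 \<le> (cmod x)^2 + (cmod y)^2"
  by (rule real_prod_le2)

lemma H2_abs_summable: "a \<in> H2 \<Longrightarrow> b \<in> H2 \<Longrightarrow> summable (\<lambda>k. cmod (a k) * cmod (b k))"
  unfolding H2_iff
  apply (rule summable_comparison_test'[where g="\<lambda>k. ((cmod (a k))^2 + (cmod (b k))^2) / 2" and N=0])
  by (auto intro!: summable_add summable_divide simp: abs_prod_le2)

lemma ip_summable: "a \<in> H2 \<Longrightarrow> b \<in> H2 \<Longrightarrow> summable (\<lambda>k. a k * cnj (b k))"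
  apply (rule summable_norm_cancel)
  using H2_abs_summable[of a b] by (simp add: norm_mult)

lemma nrm_nonneg: "a \<in> H2 \<Longrightarrow> nrm a \<ge> 0"
  unfolding nrm_def H2_iff by (simp add: suminf_nonneg)

lemma term_le_nrm: "a \<in> H2 \<Longrightarrow> (cmod (a k))^2 \<le> nrm a"
  unfolding nrm_def H2_iff using sum_le_suminf[of "\<lambda>k. (cmod (a k))^2" "{k}"] by simp

lemma partial_le_nrm: "a \<in> H2 \<Longrightarrow> (\<Sum>k<N. (cmod (a k))^2) \<le> nrm a"
  unfolding nrm_def H2_iff using sum_le_suminf[of "\<lambda>k. (cmod (a k))^2" "{..<N}"] by simp

lemma cmod_sq_expand:
  "(cmod (a - t * w))^2 = (cmod a)^2 - 2 * Re (cnj t * (a * cnj w)) + (cmod t)^2 * (cmod w)^2"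
  unfolding cmod_power2 by (simp add: power2_eq_square algebra_simps)

lemma suminf_3: "summable (A::nat\<Rightarrow>real) \<Longrightarrow> summable B \<Longrightarrow> summable C \<Longrightarrow>
   (\<Sum>k. A k - B k + C k) = suminf A - suminf B + suminf C"
  by (rule sums_unique[symmetric]) (intro sums_add sums_diff summable_sums)

lemma suminf_3': "summable (A::nat\<Rightarrow>real) \<Longrightarrow> summable B \<Longrightarrow> summable C \<Longrightarrow>
   (\<Sum>k. 2 * A k + 2 * B k - 4 * C k) = 2 * suminf A + 2 * suminf B - 4 * suminf C"
  by (rule sums_unique[symmetric]) (intro sums_add sums_diff sums_mult summable_sums)

lemma suminf_half: "summable A \<Longrightarrow> summable B \<Longrightarrow>
   (\<Sum>k. ((lam::real) * A k + B k / lam) / 2) = (lam * suminf A + suminf B / lam) / 2"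
  by (rule sums_unique[symmetric]) (intro sums_add sums_divide sums_mult summable_sums)

lemma suminf_2Re: "summable (f :: nat \<Rightarrow> complex) \<Longrightarrow> (\<Sum>k. 2 * Re (c * f k)) = 2 * Re (c * suminf f)"
proof -
  assume f: "summable f"
  have s: "summable (\<lambda>k. c * f k)" using f by (rule summable_mult)
  have "Re (\<Sum>k. c * f k) = (\<Sum>k. Re (c * f k))" by (rule Re_suminf[OF s])
  moreover have "(\<Sum>k. c * f k) = c * suminf f" by (rule suminf_mult[OF f])
  moreover have "(\<Sum>k. 2 * Re (c * f k)) = 2 * (\<Sum>k. Re (c * f k))"
    by (rule suminf_mult[OF summable_Re[OF s]])
  ultimately show ?thesis by simp
qed

lemma nrm_expand:
  assumes a: "a \<in> H2" and w: "w \<in> H2"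
  shows "nrm (\<lambda>k. a k - t * w k) = nrm a - 2 * Re (cnj t * ip a w) + (cmod t)^2 * nrm w"
proof -
  have s1: "summable (\<lambda>k. (cmod (a k))^2)" using a by (simp add: H2_iff)
  have s3: "summable (\<lambda>k. (cmod (w k))^2)" using w by (simp add: H2_iff)
  have s2c: "summable (\<lambda>k. cnj t * (a k * cnj (w k)))"
    using ip_summable[OF a w] by (rule summable_mult)
  have s2: "summable (\<lambda>k. 2 * Re (cnj t * (a k * cnj (w k))))"
    using summable_Re[OF s2c] by (rule summable_mult)
  have s3': "summable (\<lambda>k. (cmod t)^2 * (cmod (w k))^2)" using s3 by (rule summable_mult)
  have "nrm (\<lambda>k. a k - t * w k) = (\<Sum>k. (cmod (a k))^2 - 2 * Re (cnj t * (a k * cnj (w k))) + (cmod t)^2 * (cmod (w k))^2)"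
    unfolding nrm_def by (simp add: cmod_sq_expand)
  also have "\<dots> = (\<Sum>k. (cmod (a k))^2) - (\<Sum>k. 2 * Re (cnj t * (a k * cnj (w k)))) + (\<Sum>k. (cmod t)^2 * (cmod (w k))^2)"
    by (rule suminf_3[OF s1 s2 s3'])
  also have "(\<Sum>k. 2 * Re (cnj t * (a k * cnj (w k)))) = 2 * Re (cnj t * ip a w)"
    unfolding ip_def by (rule suminf_2Re[OF ip_summable[OF a w]])
  also have "(\<Sum>k. (cmod t)^2 * (cmod (w k))^2) = (cmod t)^2 * nrm w"
    unfolding nrm_def using s3 by (rule suminf_mult)
  finally show ?thesis unfolding nrm_def by simp
qed

lemma parallelogram_pt:
  "(cmod (x - y))^2 = 2 * (cmod (f - x))^2 + 2 * (cmod (f - y))^2 - 4 * (cmod (f - (x + y) / 2))^2"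
  unfolding cmod_power2 by (simp add: power2_eq_square field_simps)

lemma nrm_parallelogram:
  assumes "f \<in> H2" "x \<in> H2" "y \<in> H2"
  shows "nrm (\<lambda>k. x k - y k) = 2 * nrm (\<lambda>k. f k - x k) + 2 * nrm (\<lambda>k. f k - y k)
           - 4 * nrm (\<lambda>k. f k - (x k + y k) / 2)"
proof -
  have m: "(\<lambda>k. (x k + y k) / 2) \<in> H2"
    using H2_scale[OF H2_add[OF assms(2,3)], of "1/2"] by simp
  have s1: "summable (\<lambda>k. (cmod (f k - x k))^2)" using H2_diff[OF assms(1,2)] by (simp add: H2_iff)
  have s2: "summable (\<lambda>k. (cmod (f k - y k))^2)" using H2_diff[OF assms(1,3)] by (simp add: H2_iff)
  have s3: "summable (\<lambda>k. (cmod (f k - (x k + y k) / 2))^2)" using H2_diff[OF assms(1) m] by (simp add: H2_iff)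
  show ?thesis
  proof -
    have e: "\<And>k. (cmod (x k - y k))^2 = 2 * (cmod (f k - x k))^2 + 2 * (cmod (f k - y k))^2
       - 4 * (cmod (f k - (x k + y k) / 2))^2" by (rule parallelogram_pt)
    show ?thesis unfolding nrm_def by (simp only: e suminf_3'[OF s1 s2 s3])
  qed
qed

lemma ip_scale_right: "a \<in> H2 \<Longrightarrow> w \<in> H2 \<Longrightarrow> ip a (\<lambda>k. c * w k) = cnj c * ip a w"
  unfolding ip_def using suminf_mult[OF ip_summable, of a w "cnj c"]
  by (simp add: algebra_simps)

lemma ip_cnj: "a \<in> H2 \<Longrightarrow> w \<in> H2 \<Longrightarrow> cnj (ip a w) = (\<Sum>k. cnj (a k) * w k)"
  unfolding ip_def using bounded_linear.suminf[OF bounded_linear_cnj ip_summable, of a w]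
  by simp

lemma abs_ip_le: "a \<in> H2 \<Longrightarrow> w \<in> H2 \<Longrightarrow> cmod (ip a w) \<le> (\<Sum>k. cmod (a k) * cmod (w k))"
  unfolding ip_def using summable_norm[of "\<lambda>k. a k * cnj (w k)"] H2_abs_summable[of a w]
  by (simp add: norm_mult)

lemma abs_ip_le2:
  assumes "a \<in> H2" "w \<in> H2" "lam > 0"
  shows "cmod (ip a w) \<le> (lam * nrm a + nrm w / lam) / 2"
proof -
  have "cmod (ip a w) \<le> (\<Sum>k. cmod (a k) * cmod (w k))" using abs_ip_le assms by blast
  also have "\<dots> \<le> (\<Sum>k. (lam * (cmod (a k))^2 + (cmod (w k))^2 / lam) / 2)"
  proof (rule suminf_le)
    fix k
    have "(sqrt lam * cmod (a k)) * (cmod (w k) / sqrt lam) * 2 \<le> (sqrt lam * cmod (a k))^2 + (cmod (w k) / sqrt lam)^2"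
      by (rule real_prod_le2)
    then show "cmod (a k) * cmod (w k) \<le> (lam * (cmod (a k))^2 + (cmod (w k))^2 / lam) / 2"
      using assms(3) by (simp add: power_mult_distrib power_divide)
  next
    show "summable (\<lambda>k. cmod (a k) * cmod (w k))" using H2_abs_summable assms by blast
    show "summable (\<lambda>k. (lam * (cmod (a k))^2 + (cmod (w k))^2 / lam) / 2)"
      using assms by (auto simp: H2_iff intro!: summable_divide summable_add summable_mult)
  qed
  also have "\<dots> = (lam * nrm a + nrm w / lam) / 2"
    using assms unfolding nrm_def H2_iff by (intro suminf_half) auto
  finally show ?thesis .
qed


definition Vs :: "('i \<Rightarrow> nat \<Rightarrow> complex) \<Rightarrow> (nat \<Rightarrow> complex) set" where
  "Vs K = {v. \<exists>A c. finite A \<and> v = (\<lambda>k. \<Sum>i\<in>A. c i * K i k)}"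

lemma Vs_H2: "(\<And>i. K i \<in> H2) \<Longrightarrow> v \<in> Vs K \<Longrightarrow> v \<in> H2"
  unfolding Vs_def by (auto intro!: H2_sum H2_scale)

lemma Vs_lin:
  assumes "v \<in> Vs K" "w \<in> Vs K"
  shows "(\<lambda>k. a * v k + b * w k) \<in> Vs K"
proof -
  obtain A c where A: "finite A" "v = (\<lambda>k. \<Sum>i\<in>A. c i * K i k)" using assms(1) unfolding Vs_def by blast
  obtain B d where B: "finite B" "w = (\<lambda>k. \<Sum>i\<in>B. d i * K i k)" using assms(2) unfolding Vs_def by blast
  define e where "e i = a * (if i \<in> A then c i else 0) + b * (if i \<in> B then d i else 0)" for i
  have r1: "(\<Sum>i\<in>A \<union> B. (if i \<in> A then c i else 0) * K i k) = (\<Sum>i\<in>A. c i * K i k)" for k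
  proof -
    have "(\<Sum>i\<in>A \<union> B. (if i \<in> A then c i else 0) * K i k) = (\<Sum>i\<in>A \<union> B. (if i \<in> A then c i * K i k else 0))"
      by (intro sum.cong) auto
    also have "\<dots> = (\<Sum>i\<in>(A \<union> B) \<inter> A. c i * K i k)" by (rule sum.inter_restrict[symmetric]) (use A B in auto)
    also have "(A \<union> B) \<inter> A = A" by auto
    finally show ?thesis .
  qed
  have r2: "(\<Sum>i\<in>A \<union> B. (if i \<in> B then d i else 0) * K i k) = (\<Sum>i\<in>B. d i * K i k)" for k
  proof -
    have "(\<Sum>i\<in>A \<union> B. (if i \<in> B then d i else 0) * K i k) = (\<Sum>i\<in>A \<union> B. (if i \<in> B then d i * K i k else 0))"
      by (intro sum.cong) auto
    also have "\<dots> = (\<Sum>i\<in>(A \<union> B) \<inter> B. d i * K i k)" by (rule sum.inter_restrict[symmetric]) (use A B in auto)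
    also have "(A \<union> B) \<inter> B = B" by auto
    finally show ?thesis .
  qed
  have "(\<lambda>k. a * v k + b * w k) = (\<lambda>k. \<Sum>i\<in>A \<union> B. e i * K i k)"
  proof
    fix k
    have "(\<Sum>i\<in>A \<union> B. e i * K i k) = a * (\<Sum>i\<in>A \<union> B. (if i \<in> A then c i else 0) * K i k)
        + b * (\<Sum>i\<in>A \<union> B. (if i \<in> B then d i else 0) * K i k)"
      unfolding e_def by (simp add: sum_distrib_left sum.distrib algebra_simps)
    then show "a * v k + b * w k = (\<Sum>i\<in>A \<union> B. e i * K i k)"
      using r1 r2 A B by simp
  qed
  then show ?thesis unfolding Vs_def using A B by blast
qed

lemma Vs_single: "(\<lambda>k. c * K i k) \<in> Vs K"
  unfolding Vs_def by (rule CollectI, rule exI[of _ "{i}"], rule exI[of _ "\<lambda>_. c"]) simp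

lemma Vs_zero: "(\<lambda>k. 0) \<in> Vs K"
  unfolding Vs_def by (rule CollectI, rule exI[of _ "{}"]) simp

lemma ip_add_left: "x \<in> H2 \<Longrightarrow> y \<in> H2 \<Longrightarrow> w \<in> H2 \<Longrightarrow> ip (\<lambda>k. x k + y k) w = ip x w + ip y w"
  unfolding ip_def using suminf_add[OF ip_summable ip_summable, of x w y w]
  by (simp add: algebra_simps)

lemma aux_pos: "(m::real) > 0 \<Longrightarrow> 2 * (1/m) * R < 1/(m*m) + (1/m)^2 * W \<Longrightarrow> R < (1+W)/(2*m)"
  by (simp add: field_simps power2_eq_square)

lemma aux_neg: "(m::real) > 0 \<Longrightarrow> 2 * (-1/m) * R < 1/(m*m) + (-1/m)^2 * W \<Longrightarrow> -R < (1+W)/(2*m)"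
  by (simp add: field_simps power2_eq_square)

lemma aux_e: "(m::real) > 0 \<Longrightarrow> N \<le> 2 * (1/(m*m)) \<Longrightarrow> (m * N + W / m) / 2 \<le> (2 + W) / (2*m)"
proof -
  assume m: "m > 0" and N: "N \<le> 2 * (1/(m*m))"
  have "m * N \<le> m * (2 * (1/(m*m)))" using N m by (intro mult_left_mono) auto
  also have "\<dots> = 2 / m" using m by (simp add: field_simps)
  finally have "m * N + W / m \<le> 2/m + W/m" by simp
  also have "\<dots> = (2 + W) / m" by (simp add: add_divide_distrib)
  finally have "m * N + W / m \<le> (2 + W) / m" .
  then have "(m * N + W / m) / 2 \<le> (2 + W) / m / 2" by (rule divide_right_mono) simp
  then show ?thesis by simp
qed



lemma proj:
  assumes K: "\<And>i. K i \<in> H2" and f: "f \<in> H2" and eps: "eps > 0"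
    and far: "\<And>v. v \<in> Vs K \<Longrightarrow> eps \<le> nrm (\<lambda>k. f k - v k)"
  shows "\<exists>g\<in>H2. (\<exists>k. g k \<noteq> 0) \<and> (\<forall>i. ip g (K i) = 0)"
proof -
  define D where "D = (\<lambda>v. nrm (\<lambda>k. f k - v k)) ` Vs K"
  define d where "d = Inf D"
  have VH: "\<And>v. v \<in> Vs K \<Longrightarrow> v \<in> H2" using Vs_H2 K by blast
  have Dne: "D \<noteq> {}" using Vs_zero unfolding D_def by blast
  have bdd: "bdd_below D" unfolding D_def
    by (rule bdd_belowI[of _ 0]) (auto intro!: nrm_nonneg H2_diff[OF f VH])
  have low: "\<And>v. v \<in> Vs K \<Longrightarrow> d \<le> nrm (\<lambda>k. f k - v k)"
    unfolding d_def using bdd unfolding D_def by (auto intro!: cInf_lower)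
  have deps: "eps \<le> d" unfolding d_def using Dne by (rule cInf_greatest) (auto simp: D_def far)
  define r where "r j = inverse (real (Suc j))" for j
  have rpos: "r j > 0" for j by (simp add: r_def)
  have "\<exists>v. v \<in> Vs K \<and> nrm (\<lambda>k. f k - v k) < d + r j" for j
  proof -
    have "Inf D < d + r j" using rpos[of j] unfolding d_def by simp
    from cInf_lessD[OF Dne this] show ?thesis unfolding D_def by blast
  qed
  then have "\<exists>v. \<forall>j. v j \<in> Vs K \<and> nrm (\<lambda>k. f k - v j k) < d + r j" by (rule choice[OF allI])
  then obtain v where vv: "\<forall>j. v j \<in> Vs K \<and> nrm (\<lambda>k. f k - v j k) < d + r j" by blast
  have v: "\<And>j. v j \<in> Vs K" "\<And>j. nrm (\<lambda>k. f k - v j k) < d + r j" using vv by auto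
  have vH: "v j \<in> H2" for j using VH v(1) by blast
  have cb: "nrm (\<lambda>k. v i k - v j k) \<le> 2 * r i + 2 * r j" for i j
  proof -
    have mid: "(\<lambda>k. (v i k + v j k) / 2) \<in> Vs K"
      using Vs_lin[OF v(1)[of i] v(1)[of j], of "1/2" "1/2"] by (simp add: add_divide_distrib)
    have "nrm (\<lambda>k. v i k - v j k) = 2 * nrm (\<lambda>k. f k - v i k) + 2 * nrm (\<lambda>k. f k - v j k)
         - 4 * nrm (\<lambda>k. f k - (v i k + v j k) / 2)"
      by (rule nrm_parallelogram[OF f vH vH])
    moreover have "d \<le> nrm (\<lambda>k. f k - (v i k + v j k) / 2)" by (rule low[OF mid])
    ultimately show ?thesis using v(2)[of i] v(2)[of j] by linarith
  qed
  have cbk: "(cmod (v i k - v j k))^2 \<le> 2 * r i + 2 * r j" for i j k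
    using term_le_nrm[OF H2_diff[OF vH[of i] vH[of j]], of k] cb[of i j] by linarith
  have conv: "(\<lambda>j. v j k) \<longlonglongrightarrow> lim (\<lambda>j. v j k)" for k
  proof -
    have "Cauchy (\<lambda>j. v j k)"
    proof (rule CauchyI)
      fix e :: real assume "0 < e"
      then have "e^2 / 4 > 0" by simp
      then obtain M where M: "M > 0" "inverse (real M) < e^2 / 4" using ex_inverse_of_nat_less by blast
      have "\<forall>m\<ge>M. \<forall>n\<ge>M. cmod (v m k - v n k) < e"
      proof (intro allI impI)
        fix m n assume mn: "M \<le> m" "M \<le> n"
        have "r m \<le> inverse (real M)" unfolding r_def by (rule le_imp_inverse_le) (use mn M(1) in auto)
        moreover have "r n \<le> inverse (real M)" unfolding r_def by (rule le_imp_inverse_le) (use mn M(1) in auto)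
        ultimately have "(cmod (v m k - v n k))^2 < e^2" using cbk[where i=m and j=n and k=k] M(2) by linarith
        then show "cmod (v m k - v n k) < e" by (rule power_less_imp_less_base) (use \<open>0<e\<close> in simp)
      qed
      then show "\<exists>M. \<forall>m\<ge>M. \<forall>n\<ge>M. norm (v m k - v n k) < e" by blast
    qed
    then have "convergent (\<lambda>j. v j k)" by (simp add: Cauchy_convergent_iff)
    then show ?thesis by (rule convergent_LIMSEQ_iff[THEN iffD1])
  qed
  define p where "p k = lim (\<lambda>j. v j k)" for k
  have pl: "(\<lambda>j. v j k) \<longlonglongrightarrow> p k" for k using conv p_def by simp
  have r0: "r \<longlonglongrightarrow> 0" unfolding r_def[abs_def] by (rule LIMSEQ_inverse_real_of_nat)
  have part: "(\<Sum>k<N. (cmod (v i k - p k))^2) \<le> 2 * r i" for i N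
  proof (rule LIMSEQ_le)
    show "(\<lambda>j. \<Sum>k<N. (cmod (v i k - v j k))^2) \<longlonglongrightarrow> (\<Sum>k<N. (cmod (v i k - p k))^2)"
      by (intro tendsto_intros pl)
    show "(\<lambda>j. 2 * r i + 2 * r j) \<longlonglongrightarrow> 2 * r i"
      using tendsto_add[OF tendsto_const tendsto_mult[OF tendsto_const r0], of "2 * r i" 2] by simp
    show "\<exists>N'. \<forall>j\<ge>N'. (\<Sum>k<N. (cmod (v i k - v j k))^2) \<le> 2 * r i + 2 * r j"
      by (intro exI[of _ 0] allI impI order_trans[OF partial_le_nrm[OF H2_diff[OF vH vH]] cb])
  qed
  have es: "summable (\<lambda>k. (cmod (v i k - p k))^2)" for i
    by (rule summableI_nonneg_bounded[where x="2 * r i"]) (auto intro: part)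
  have eH: "(\<lambda>k. v i k - p k) \<in> H2" for i using es by (simp add: H2_iff)
  have enrm: "nrm (\<lambda>k. v i k - p k) \<le> 2 * r i" for i
    unfolding nrm_def by (rule suminf_le_const[OF es part])
  have pH: "p \<in> H2" using H2_diff[OF vH[of 0] eH[of 0]] by simp
  define g where "g = (\<lambda>k. f k - p k)"
  have gH: "g \<in> H2" unfolding g_def using H2_diff[OF f pH] .
  have reo: "Re (ip g w) = 0" if w: "w \<in> Vs K" for w
  proof -
    have wH: "w \<in> H2" using VH w .
    define W where "W = nrm w"
    have W0: "W \<ge> 0" using nrm_nonneg wH W_def by simp
    have bound: "\<bar>Re (ip g w)\<bar> \<le> (3 + 2*W) / (2 * real m)" if m: "m > 0" for m :: nat
    proof -
      define i where "i = m * m - 1"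
      have si: "Suc i = m * m" unfolding i_def using m by simp
      have ri: "r i = 1 / (real m * real m)" unfolding r_def si by (simp add: divide_inverse)
      define a where "a = (\<lambda>k. f k - v i k)"
      have aH: "a \<in> H2" unfolding a_def using H2_diff[OF f vH] .
      define R where "R = Re (ip a w)"
      have key: "2 * s * R < r i + s^2 * W" for s :: real
      proof -
        have "(\<lambda>k. 1 * v i k + of_real s * w k) \<in> Vs K" by (rule Vs_lin[OF v(1)[of i] w])
        then have "d \<le> nrm (\<lambda>k. f k - (1 * v i k + of_real s * w k))" by (rule low)
        also have "(\<lambda>k. f k - (1 * v i k + of_real s * w k)) = (\<lambda>k. a k - of_real s * w k)"
          by (simp add: a_def algebra_simps)
        also have "nrm \<dots> = nrm a - 2 * Re (cnj (of_real s) * ip a w) + (cmod (of_real s))^2 * nrm w"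
          by (rule nrm_expand[OF aH wH])
        also have "\<dots> = nrm a - 2 * s * R + s^2 * W" by (simp add: R_def W_def)
        finally have "d \<le> nrm a - 2 * s * R + s^2 * W" .
        moreover have "nrm a < d + r i" using v(2)[of i] by (simp add: a_def)
        ultimately show ?thesis by linarith
      qed
      have mpos: "real m > 0" using m by simp
      have k1: "2 * (1 / real m) * R < 1/(real m * real m) + (1 / real m)^2 * W"
        unfolding ri[symmetric] by (rule key)
      have k2: "2 * (-1 / real m) * R < 1/(real m * real m) + (-1 / real m)^2 * W"
        unfolding ri[symmetric] by (rule key)
      have R1: "R < (1+W)/(2 * real m)" using aux_pos[OF mpos k1] .
      have R2: "-R < (1+W)/(2 * real m)" using aux_neg[OF mpos k2] .
      define e where "e = (\<lambda>k. v i k - p k)"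
      have eH': "e \<in> H2" unfolding e_def by (rule eH)
      have "cmod (ip e w) \<le> (real m * nrm e + nrm w / real m) / 2" by (rule abs_ip_le2[OF eH' wH mpos])
      also have "\<dots> \<le> (2 + W) / (2 * real m)" unfolding W_def
        by (rule aux_e[OF mpos]) (use enrm[of i] ri in \<open>simp add: e_def\<close>)
      finally have E: "cmod (ip e w) \<le> (2 + W) / (2 * real m)" .
      have "g = (\<lambda>k. a k + e k)" unfolding g_def a_def e_def by auto
      then have "ip g w = ip a w + ip e w" using ip_add_left[OF aH eH' wH] by simp
      then have "\<bar>Re (ip g w)\<bar> \<le> \<bar>R\<bar> + cmod (ip e w)" unfolding R_def
        using abs_Re_le_cmod[of "ip e w"] by simp
      also have "\<dots> \<le> (1+W)/(2 * real m) + (2 + W) / (2 * real m)" using R1 R2 E by linarith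
      also have "\<dots> = (3 + 2*W) / (2 * real m)" by (simp add: add_divide_distrib[symmetric])
      finally show ?thesis .
    qed
    show ?thesis
    proof (rule ccontr)
      assume "Re (ip g w) \<noteq> 0"
      then have X: "\<bar>Re (ip g w)\<bar> > 0" by simp
      obtain m :: nat where m: "(3 + 2*W) / \<bar>Re (ip g w)\<bar> < m" using reals_Archimedean2 by blast
      have m0: "m > 0"
      proof (rule ccontr)
        assume "\<not> m > 0"
        then have "m = 0" by simp
        with m have "(3 + 2*W) / \<bar>Re (ip g w)\<bar> < 0" by simp
        moreover have "(3 + 2*W) / \<bar>Re (ip g w)\<bar> \<ge> 0" using X W0 by simp
        ultimately show False by simp
      qed
      have A: "3 + 2*W < real m * \<bar>Re (ip g w)\<bar>" using m X by (simp add: field_simps)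
      have B: "2 * (real m * \<bar>Re (ip g w)\<bar>) \<le> 3 + 2 * W" using bound[OF m0] m0 by (simp add: field_simps)
      have C: "real m * \<bar>Re (ip g w)\<bar> > 0" using m0 X by simp
      show False using A B C by linarith
    qed
  qed
  have orth: "ip g (K i) = 0" for i
  proof -
    have "Re (ip g (K i)) = 0" using reo[OF Vs_single[of 1 K i]] by simp
    moreover have "Re (ip g (\<lambda>k. \<i> * K i k)) = 0" by (rule reo[OF Vs_single])
    then have "Im (ip g (K i)) = 0" using ip_scale_right[OF gH K, of "\<i>" i] by simp
    ultimately show ?thesis by (simp add: complex_eq_iff)
  qed
  have nz: "\<exists>k. g k \<noteq> 0"
  proof (rule ccontr)
    assume "\<not> (\<exists>k. g k \<noteq> 0)"
    then have fp: "f k = p k" for k unfolding g_def by auto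
    obtain n where n: "n > 0" "inverse (real n) < eps / 2"
      using ex_inverse_of_nat_less[of "eps/2"] eps by auto
    define i where "i = n - 1"
    have i: "inverse (real (Suc i)) < eps / 2" using n unfolding i_def by simp
    have "nrm (\<lambda>k. f k - v i k) = nrm (\<lambda>k. v i k - p k)"
      unfolding nrm_def fp by (simp add: norm_minus_commute)
    also have "\<dots> \<le> 2 * r i" by (rule enrm)
    also have "\<dots> < eps" using i unfolding r_def by simp
    finally have "nrm (\<lambda>k. f k - v i k) < eps" .
    moreover have "eps \<le> nrm (\<lambda>k. f k - v i k)" using low[OF v(1)[of i]] deps by linarith
    ultimately show False by simp
  qed
  show ?thesis using gH nz orth by blast
qed


lemma seg_real:
  assumes "u \<in> closed_segment (of_real a :: complex) (of_real b)" "a \<le> b"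
  shows "u \<in> \<real>" "a \<le> Re u" "Re u \<le> b"
proof -
  obtain t where t: "0 \<le> t" "t \<le> 1" "u = (1 - t) *\<^sub>R of_real a + t *\<^sub>R of_real b"
    using assms(1) unfolding in_segment by blast
  have u: "u = of_real ((1 - t) * a + t * b)" using t(3) by (simp add: scaleR_conv_of_real)
  show "u \<in> \<real>" using u by simp
  have "a = (1 - t) * a + t * a" by (simp add: algebra_simps)
  also have "\<dots> \<le> (1 - t) * a + t * b" using t assms(2) by (intro add_left_mono mult_left_mono) auto
  finally show "a \<le> Re u" using u by simp
  have "(1 - t) * a + t * b \<le> (1 - t) * b + t * b" using t assms(2) by (intro add_right_mono mult_left_mono) auto
  also have "\<dots> = b" by (simp add: algebra_simps)
  finally show "Re u \<le> b" using u by simp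
qed

lemma powr_diff_bound:
  fixes z :: complex and k :: nat
  assumes k: "k \<ge> 1" and z: "Re z \<le> 1"
  shows "cmod (of_nat (k+1) powr z - of_nat k powr z) \<le> cmod z * real k powr (Re z - 1)"
proof -
  define S where "S = closed_segment (of_real (real k) :: complex) (of_real (real (k+1)))"
  have kk: "real k \<le> real (k+1)" by simp
  have df: "((\<lambda>w. w powr z) has_field_derivative (z * u powr (z - 1))) (at u within S)" if u: "u \<in> S" for u
  proof -
    have "u \<in> \<real>" "real k \<le> Re u" using seg_real[OF u[unfolded S_def] kk] by auto
    then have "Re u > 0" using k by linarith
    then have "u \<notin> \<real>\<^sub>\<le>\<^sub>0" by (simp add: complex_nonpos_Reals_iff)
    then show ?thesis by (rule has_field_derivative_at_within[OF has_field_derivative_powr])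
  qed
  have dn: "norm (z * u powr (z - 1)) \<le> cmod z * real k powr (Re z - 1)" if u: "u \<in> S" for u
  proof -
    have uR: "u \<in> \<real>" and uk: "real k \<le> Re u" using seg_real[OF u[unfolded S_def] kk] by auto
    have "norm (u powr (z - 1)) = Re u powr Re (z - 1)"
      by (rule norm_powr_real_powr[OF uR]) (use uk in simp)
    also have "\<dots> \<le> real k powr (Re z - 1)"
      using powr_mono2'[of "Re z - 1" "real k" "Re u"] z k uk by simp
    finally show ?thesis using mult_left_mono[OF _ norm_ge_zero[of z]] by (simp add: norm_mult)
  qed
  have "norm ((of_real (real (k+1)) :: complex) powr z - of_real (real k) powr z)
        \<le> (cmod z * real k powr (Re z - 1)) * norm (of_real (real (k+1)) - (of_real (real k) :: complex))"
    by (rule field_differentiable_bound[OF _ df dn]) (simp_all add: S_def)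
  then show ?thesis by simp
qed

lemma phi_bound:
  assumes k: "k \<ge> 1" and s: "s \<noteq> 0" "Re s \<ge> 0"
  shows "cmod (phi k s) \<le> cmod (1 - s) / cmod s * real k powr (- Re s)"
proof -
  have "phi k s = - (1 / s) * (of_nat (k+1) powr (1 - s) - of_nat k powr (1 - s))"
    using k by (simp add: phi_def)
  then have "cmod (phi k s) = cmod (of_nat (k+1) powr (1 - s) - of_nat k powr (1 - s)) / cmod s"
    by (simp add: norm_mult norm_divide)
  also have "\<dots> \<le> (cmod (1 - s) * real k powr (Re (1 - s) - 1)) / cmod s"
    by (rule divide_right_mono[OF powr_diff_bound]) (use k s in auto)
  finally show ?thesis by simp
qed


lemma powr_sq: "((x::real) powr a)^2 = x powr (2 * a)"
  by (simp add: power2_eq_square powr_add[symmetric])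

lemma phi_H2:
  assumes w: "Re w = 1"
  shows "(\<lambda>k. phi k w) \<in> H2"
proof -
  have w0: "w \<noteq> 0" using w by auto
  define C where "C = cmod (1 - w) / cmod w"
  have C0: "C \<ge> 0" unfolding C_def by simp
  have b: "norm ((cmod (phi k w))^2) \<le> C^2 * real k powr (-2)" if k: "k \<ge> 1" for k
  proof -
    have "cmod (phi k w) \<le> C * real k powr (-1)"
      using phi_bound[OF k w0] w unfolding C_def by simp
    then have "(cmod (phi k w))^2 \<le> (C * real k powr (-1))^2"
      by (intro power_mono) auto
    also have "\<dots> = C^2 * real k powr (-2)" unfolding power_mult_distrib powr_sq by simp
    finally show ?thesis by simp
  qed
  have s: "summable (\<lambda>k. C^2 * real k powr (-2))"
    by (intro summable_mult) (simp add: summable_real_powr_iff)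
  show ?thesis unfolding H2_iff
    by (rule summable_comparison_test'[OF s b]) simp
qed

lemma kappa_H2: "kappa (s_param n \<alpha>) \<in> H2"
proof -
  have "Re (cnj (s_param n \<alpha>)) = 1" by (simp add: s_param_def)
  then show ?thesis unfolding kappa_def by (rule phi_H2)
qed

definition G :: "(nat \<Rightarrow> complex) \<Rightarrow> complex \<Rightarrow> complex" where
  "G h s = (\<Sum>k. h k * phi k s)"

definition SR :: "real \<Rightarrow> complex set" where
  "SR R = {s. 3/4 < Re s} \<inter> ball 0 R"

lemma SR_open: "open (SR R)"
  unfolding SR_def by (intro open_Int open_halfspace_Re_gt open_ball)

lemma SR_conn: "connected (SR R)"
proof -
  have "convex {s::complex. 3/4 < Re s}" by (rule convex_halfspace_Re_gt)
  then have "convex (SR R)" unfolding SR_def by (intro convex_Int) auto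
  then show ?thesis by (rule convex_connected)
qed

lemma phi_holo: "(\<lambda>s. phi k s) holomorphic_on SR R"
proof (cases "k = 0")
  case True
  then have e: "(\<lambda>s. phi k s) = (\<lambda>s. - 1 / s)" by (simp add: phi_def fun_eq_iff)
  have nz: "s \<noteq> 0" if "s \<in> SR R" for s using that by (auto simp: SR_def)
  show ?thesis unfolding e by (intro holomorphic_intros) (use nz in auto)
next
  case False
  then have e: "(\<lambda>s. phi k s) = (\<lambda>s. - (1 / s) * (of_nat (k+1) powr (1 - s) - of_nat k powr (1 - s)))"
    by (simp add: phi_def fun_eq_iff)
  have nz: "s \<noteq> 0" if "s \<in> SR R" for s using that by (auto simp: SR_def)
  show ?thesis unfolding e by (intro holomorphic_intros) (use nz in auto)
qed

lemma G_holo: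
  assumes h: "h \<in> H2"
  shows "G h holomorphic_on SR R"
proof -
  define C where "C = (1 + \<bar>R\<bar>) * (4/3)"
  have C0: "C \<ge> 0" unfolding C_def by simp
  define M where "M k = cmod (h k) * C * real k powr (-3/4)" for k
  have hol: "(\<lambda>s. h k * phi k s) holomorphic_on SR R" for k
    by (intro holomorphic_intros phi_holo)
  have hfd: "((\<lambda>s. h k * phi k s) has_field_derivative deriv (\<lambda>s. h k * phi k s) x) (at x)"
    if "x \<in> SR R" for k x
    by (rule holomorphic_derivI[OF hol SR_open that])
  have bnd: "norm (h k * phi k s) \<le> M k" if k: "k \<ge> 1" and s: "s \<in> SR R" for k s
  proof -
    have re: "Re s > 3/4" and sR: "cmod s < R" using s by (auto simp: SR_def)
    have s0: "s \<noteq> 0" using re by auto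
    have cs: "cmod s > 3/4" using re abs_Re_le_cmod[of s] by linarith
    have c1: "cmod (1 - s) \<le> 1 + \<bar>R\<bar>" using norm_triangle_ineq4[of 1 s] sR by simp
    have q: "cmod (1 - s) / cmod s \<le> C"
    proof -
      have "cmod (1 - s) / cmod s \<le> (1 + \<bar>R\<bar>) / (3/4)"
        by (rule frac_le) (use c1 cs in auto)
      then show ?thesis unfolding C_def by simp
    qed
    have pw: "real k powr (- Re s) \<le> real k powr (-3/4)"
      by (rule powr_mono) (use re k in auto)
    have "cmod (phi k s) \<le> cmod (1 - s) / cmod s * real k powr (- Re s)"
      by (rule phi_bound[OF k s0]) (use re in simp)
    also have "\<dots> \<le> C * real k powr (-3/4)"
      by (rule mult_mono[OF q pw]) (use C0 in auto)
    finally have "cmod (phi k s) \<le> C * real k powr (-3/4)" .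
    then have "cmod (h k) * cmod (phi k s) \<le> cmod (h k) * (C * real k powr (-3/4))"
      by (rule mult_left_mono) simp
    then show ?thesis unfolding M_def by (simp add: norm_mult mult.assoc)
  qed
  have Msum: "summable M"
  proof -
    have s1: "summable (\<lambda>k. C * (((cmod (h k))^2 + real k powr (-3/2)) / 2))"
      using h unfolding H2_iff
      by (intro summable_mult summable_divide summable_add) (auto simp: summable_real_powr_iff)
    show ?thesis
    proof (rule summable_comparison_test'[OF s1])
      fix k :: nat assume "k \<ge> 0"
      have "cmod (h k) * real k powr (-3/4) * 2 \<le> (cmod (h k))^2 + (real k powr (-3/4))^2"
        by (rule real_prod_le2)
      also have "(real k powr (-3/4))^2 = real k powr (-3/2)" by (simp add: powr_sq)
      finally have "cmod (h k) * real k powr (-3/4) \<le> ((cmod (h k))^2 + real k powr (-3/2)) / 2"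
        by simp
      then have "C * (cmod (h k) * real k powr (-3/4)) \<le> C * (((cmod (h k))^2 + real k powr (-3/2)) / 2)"
        by (rule mult_left_mono) (rule C0)
      then show "norm (M k) \<le> C * (((cmod (h k))^2 + real k powr (-3/2)) / 2)"
        unfolding M_def using C0 by (simp add: mult_ac)
    qed
  qed
  have tog: "\<forall>\<^sub>F k in sequentially. \<forall>s\<in>SR R. norm (h k * phi k s) \<le> M k"
    using bnd by (intro eventually_sequentiallyI[of 1]) auto
  obtain g g' where gg: "\<forall>x\<in>SR R. ((\<lambda>k. h k * phi k x) sums g x) \<and> ((\<lambda>k. deriv (\<lambda>s. h k * phi k s) x) sums g' x)
      \<and> (g has_field_derivative g' x) (at x)"
    using series_and_derivative_comparison[OF SR_open Msum hfd tog] by blast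
  have eq: "g x = G h x" if "x \<in> SR R" for x
    using gg that unfolding G_def by (metis sums_unique)
  show ?thesis
    unfolding holomorphic_on_open[OF SR_open]
  proof
    fix x assume x: "x \<in> SR R"
    have d: "(g has_field_derivative g' x) (at x)" using gg x by blast
    have "(G h has_field_derivative g' x) (at x)"
      by (rule has_field_derivative_transform_within_open[OF d SR_open x eq])
    then show "\<exists>f'. (G h has_field_derivative f') (at x)" by blast
  qed
qed


lemma inv_pow_summable: "y \<ge> 2 \<Longrightarrow> summable (\<lambda>k. inverse (real (Suc k) ^ y))"
  using inverse_power_summable[of y, where 'a=real] summable_Suc_iff[of "\<lambda>k. inverse (real k ^ y)"]
  by simp

lemma ratio_bound:
  fixes m k y :: nat
  assumes y: "y \<ge> 2"
  shows "(real (m+1) / real (k+m+2))^y \<le> (real (m+1) / real (m+2))^(y-2) * (real (m+1)^2 * inverse (real (Suc k)^2))"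
proof -
  define x where "x = real (m+1) / real (k+m+2)"
  have x0: "0 \<le> x" unfolding x_def by simp
  have xq: "x \<le> real (m+1) / real (m+2)" unfolding x_def
    by (rule divide_left_mono) auto
  have xk: "x \<le> real (m+1) / real (Suc k)" unfolding x_def
    by (rule divide_left_mono) auto
  have yy: "(y-2)+2 = y" using y by simp
  have "x^y = x^(y-2) * x^2" unfolding power_add[symmetric] yy ..
  also have "\<dots> \<le> (real (m+1) / real (m+2))^(y-2) * (real (m+1) / real (Suc k))^2"
    by (intro mult_mono power_mono xq xk x0) auto
  also have "(real (m+1) / real (Suc k))^2 = real (m+1)^2 * inverse (real (Suc k)^2)"
    by (simp add: divide_inverse power_mult_distrib power_inverse)
  finally show ?thesis unfolding x_def .
qed

lemma dirichlet_unique: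
  fixes b :: "nat \<Rightarrow> complex"
  assumes bB: "\<And>k. cmod (b k) \<le> B"
    and z: "\<And>y. y \<ge> 2 \<Longrightarrow> (\<Sum>k. b k * inverse (of_nat (Suc k) ^ y)) = 0"
  shows "b m = 0"
proof (induction m rule: less_induct)
  case (less m)
  have B0: "B \<ge> 0" using bB[of 0] norm_ge_zero[of "b 0"] by linarith
  define q :: real where "q = real (m+1) / real (m+2)"
  have q0: "0 \<le> q" "q < 1" unfolding q_def by auto
  have Zs: "summable (\<lambda>k. real (m+1)^2 * inverse (real (Suc k) ^ 2))"
    by (rule summable_mult[OF inv_pow_summable]) simp
  define Z where "Z = (\<Sum>k. real (m+1)^2 * inverse (real (Suc k) ^ 2))"
  have key: "cmod (b m) \<le> B * q^(y-2) * Z" if y: "y \<ge> 2" for y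
  proof -
    define t where "t k = b k * inverse (of_nat (Suc k) ^ y)" for k
    have tn: "cmod (t k) \<le> B * inverse (real (Suc k) ^ y)" for k
    proof -
      have "cmod (t k) = cmod (b k) * inverse (real (Suc k) ^ y)"
        unfolding t_def norm_mult norm_inverse norm_power norm_of_nat ..
      also have "\<dots> \<le> B * inverse (real (Suc k) ^ y)"
        by (rule mult_right_mono[OF bB]) simp
      finally show ?thesis .
    qed
    have gs: "summable (\<lambda>k. B * inverse (real (Suc k) ^ y))"
      by (rule summable_mult[OF inv_pow_summable[OF y]])
    have ts: "summable t" by (rule summable_comparison_test'[OF gs tn])
    have "(\<Sum>k. t k) = 0" using z[OF y] unfolding t_def by simp
    moreover have "(\<Sum>k. t k) = (\<Sum>k. t (k + m)) + (\<Sum>i<m. t i)"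
      by (rule suminf_split_initial_segment[OF ts])
    moreover have "(\<Sum>i<m. t i) = 0" using less.IH unfolding t_def by simp
    ultimately have s0: "(\<Sum>k. t (k + m)) = 0" by simp
    have tms: "summable (\<lambda>k. t (k + m))" using ts by (rule summable_ignore_initial_segment)
    have "(\<Sum>k. t (Suc k + m)) = (\<Sum>k. t (k + m)) - t m" using suminf_split_head[OF tms] by simp
    then have tm: "t m = - (\<Sum>k. t (Suc k + m))" using s0 by simp
    have gs2: "summable (\<lambda>k. B * inverse (real (Suc (Suc k + m)) ^ y))"
      using summable_ignore_initial_segment[OF gs, of "Suc m"] by (simp add: add.commute)
    have e: "(\<lambda>k. B * inverse (real (Suc (Suc k + m)) ^ y) * real (m+1)^y) = (\<lambda>k. B * (real (m+1) / real (k+m+2))^y)"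
      by (rule ext) (simp add: power_divide field_simps)
    have "cmod (t m) \<le> (\<Sum>k. B * inverse (real (Suc (Suc k + m)) ^ y))"
      unfolding tm norm_minus_cancel by (rule norm_suminf_le[OF tn gs2])
    then have "cmod (t m) * real (m+1)^y \<le> (\<Sum>k. B * inverse (real (Suc (Suc k + m)) ^ y)) * real (m+1)^y"
      by (rule mult_right_mono) simp
    also have "\<dots> = (\<Sum>k. B * inverse (real (Suc (Suc k + m)) ^ y) * real (m+1)^y)"
      by (rule suminf_mult2[OF gs2])
    also have "\<dots> = (\<Sum>k. B * (real (m+1) / real (k+m+2))^y)"
      unfolding e ..
    also have "\<dots> \<le> (\<Sum>k. B * (q^(y-2) * (real (m+1)^2 * inverse (real (Suc k)^2))))"
    proof (rule suminf_le)
      show "\<And>k. B * (real (m+1) / real (k+m+2))^y \<le> B * (q^(y-2) * (real (m+1)^2 * inverse (real (Suc k)^2)))"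
        unfolding q_def by (rule mult_left_mono[OF ratio_bound[OF y] B0])
      show "summable (\<lambda>k. B * (q^(y-2) * (real (m+1)^2 * inverse (real (Suc k)^2))))"
        by (intro summable_mult Zs)
      show "summable (\<lambda>k. B * (real (m+1) / real (k+m+2))^y)"
        unfolding e[symmetric] by (rule summable_mult2[OF gs2])
    qed
    also have "\<dots> = B * q^(y-2) * Z" unfolding Z_def
      using Zs by (simp add: suminf_mult mult_ac summable_mult)
    finally have "cmod (t m) * real (m+1)^y \<le> B * q^(y-2) * Z" .
    moreover have "cmod (t m) * real (m+1)^y = cmod (b m)"
      unfolding t_def norm_mult norm_inverse norm_power norm_of_nat by simp
    ultimately show ?thesis by simp
  qed
  have lim: "(\<lambda>y. B * q^y * Z) \<longlonglongrightarrow> 0"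
    using tendsto_mult[OF tendsto_mult[OF tendsto_const LIMSEQ_power_zero] tendsto_const, of q B Z] q0
    by simp
  have "cmod (b m) \<le> 0"
  proof (rule LIMSEQ_le_const[OF lim], intro exI[of _ 0] allI impI)
    fix n :: nat
    show "cmod (b m) \<le> B * q ^ n * Z" using key[of "n+2"] by simp
  qed
  then show ?case by simp
qed


lemma phi_nat:
  assumes y: "y \<ge> 1"
  shows "phi k (of_nat (Suc y)) = - (1 / of_nat (Suc y)) * (inverse (of_nat (Suc k) ^ y) - inverse (of_nat k ^ y))"
proof -
  have e: "1 - (of_nat (Suc y) :: complex) = - of_nat y" by simp
  have p: "(of_nat m :: complex) powr (1 - of_nat (Suc y)) = inverse (of_nat m ^ y)" for m
    unfolding e powr_minus using y by (simp add: powr_nat')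
  show ?thesis
  proof (cases "k = 0")
    case True
    then show ?thesis using y by (simp add: phi_def)
  next
    case False
    then show ?thesis unfolding phi_def using p[of "k+1"] p[of k] by simp
  qed
qed

lemma H2_bound: "h \<in> H2 \<Longrightarrow> cmod (h k) \<le> sqrt (nrm h)"
  by (rule real_le_rsqrt[OF term_le_nrm])

lemma analytic_zero:
  assumes n: "n \<ge> 2" and h: "h \<in> H2" and z: "\<And>\<alpha>. G h (cnj (s_param n \<alpha>)) = 0"
  shows "h k = 0"
proof -
  have lnpos: "ln (real n) > 0" using n by simp
  define c where "c j = pi * (1 / real (Suc j)) / ln (real n)" for j
  have cpos: "c j > 0" for j unfolding c_def using lnpos by simp
  have cle: "c j \<le> pi / ln (real n)" for j
  proof -
    have "pi * (1 / real (Suc j)) \<le> pi" by (rule mult_left_le) auto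
    then show ?thesis unfolding c_def using lnpos by (intro divide_right_mono) auto
  qed
  define u where "u j = cnj (s_param n (1 / of_nat (Suc j)))" for j
  have ueq: "u j = 1 - \<i> * of_real (c j)" for j
    unfolding u_def s_param_def c_def by (simp add: of_rat_divide of_rat_add)
  have udist: "cmod (u j - 1) = c j" for j
    using cpos[of j] unfolding ueq by (simp add: norm_mult)
  have ure: "Re (u j) = 1" for j unfolding ueq by simp
  have Gw: "G h (of_nat (Suc y)) = 0" for y
  proof -
    define R where "R = real (Suc y) + 2 + pi / ln (real n)"
    have piln: "pi / ln (real n) \<ge> 0" using lnpos by simp
    have Usub: "range u \<subseteq> SR R"
    proof
      fix x assume "x \<in> range u"
      then obtain j where x: "x = u j" by blast
      have "cmod (u j) \<le> cmod (u j - 1) + cmod (1::complex)" using norm_triangle_ineq[of "u j - 1" 1] by simp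
      then have "cmod (u j) \<le> 1 + pi / ln (real n)" using udist[of j] cle[of j] by simp
      then show "x \<in> SR R" unfolding SR_def R_def x using ure[of j] by simp
    qed
    have one: "1 \<in> SR R" unfolding SR_def R_def using piln by simp
    have lp: "1 islimpt range u"
      unfolding islimpt_approachable
    proof (intro allI impI)
      fix e :: real assume e: "e > 0"
      then have "e * ln (real n) / pi > 0" using lnpos by simp
      then obtain m where m: "m > 0" "inverse (real m) < e * ln (real n) / pi"
        using ex_inverse_of_nat_less by blast
      define j where "j = m - 1"
      have sj: "Suc j = m" unfolding j_def using m by simp
      have "c j = pi * inverse (real m) / ln (real n)" unfolding c_def sj by (simp add: divide_inverse)
      also have "\<dots> < pi * (e * ln (real n) / pi) / ln (real n)"
        using m(2) lnpos by (intro divide_strict_right_mono mult_strict_left_mono) auto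
      also have "\<dots> = e" using lnpos by simp
      finally have cj: "c j < e" .
      have "u j \<noteq> 1" using udist[of j] cpos[of j] by auto
      moreover have "dist (u j) 1 < e" using udist[of j] cj by (simp add: dist_norm)
      ultimately show "\<exists>x'\<in>range u. x' \<noteq> 1 \<and> dist x' 1 < e" by blast
    qed
    have nw: "cmod (of_nat (Suc y) :: complex) = real (Suc y)" by (rule norm_of_nat)
    have rw: "Re (of_nat (Suc y) :: complex) = real (Suc y)" by simp
    have y1: "real (Suc y) \<ge> 1" by simp
    have w1: "3/4 < Re (of_nat (Suc y) :: complex)" using rw y1 by linarith
    have w2: "cmod (of_nat (Suc y) :: complex) < R" unfolding R_def nw using piln by linarith
    have wS: "of_nat (Suc y) \<in> SR R" unfolding SR_def using w1 w2 by (simp add: dist_0_norm)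
    have zU: "\<And>x. x \<in> range u \<Longrightarrow> G h x = 0" unfolding u_def using z by auto
    show ?thesis
      by (rule analytic_continuation[OF G_holo[OF h] SR_open SR_conn Usub one lp zU wS])
  qed
  define B where "B = sqrt (nrm h)"
  have hB: "cmod (h k) \<le> B" for k unfolding B_def by (rule H2_bound[OF h])
  have B0: "B \<ge> 0" using hB[of 0] norm_ge_zero[of "h 0"] by linarith
  have dz: "(\<Sum>k. (h k - h (Suc k)) * inverse (of_nat (Suc k) ^ y)) = 0" if y: "y \<ge> 2" for y
  proof -
    define a where "a k = inverse (of_nat k ^ y :: complex)" for k
    have an: "cmod (a k) = inverse (real k ^ y)" for k unfolding a_def by (simp add: norm_inverse norm_power)
    have s0: "summable (\<lambda>k. h k * a k)"
    proof (rule summable_comparison_test'[where g="\<lambda>k. B * inverse (real k ^ y)" and N=0])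
      show "summable (\<lambda>k. B * inverse (real k ^ y))"
        by (rule summable_mult[OF inverse_power_summable[OF y]])
      show "norm (h k * a k) \<le> B * inverse (real k ^ y)" for k
        unfolding norm_mult an by (rule mult_right_mono[OF hB]) simp
    qed
    have s1: "summable (\<lambda>k. h k * a (Suc k))"
    proof (rule summable_comparison_test'[where g="\<lambda>k. B * inverse (real (Suc k) ^ y)" and N=0])
      show "summable (\<lambda>k. B * inverse (real (Suc k) ^ y))"
        by (rule summable_mult[OF inv_pow_summable[OF y]])
      show "norm (h k * a (Suc k)) \<le> B * inverse (real (Suc k) ^ y)" for k
        unfolding norm_mult an by (rule mult_right_mono[OF hB]) simp
    qed
    have s2: "summable (\<lambda>k. h (Suc k) * a (Suc k))"
      using s0 summable_Suc_iff[of "\<lambda>k. h k * a k"] by simp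
    have a0: "a 0 = 0" unfolding a_def using y by simp
    have y1: "y \<ge> 1" using y by simp
    define c0 where "c0 = - (1 / (of_nat (Suc y) :: complex))"
    have c00: "c0 \<noteq> 0" unfolding c0_def by (simp del: of_nat_Suc)
    have termeq: "h k * phi k (of_nat (Suc y)) = c0 * (h k * a (Suc k) - h k * a k)" for k
      unfolding phi_nat[OF y1] a_def c0_def by (simp add: algebra_simps)
    have "0 = G h (of_nat (Suc y))" using Gw[of y] by simp
    also have "\<dots> = (\<Sum>k. c0 * (h k * a (Suc k) - h k * a k))"
      unfolding G_def termeq ..
    also have "\<dots> = c0 * (\<Sum>k. h k * a (Suc k) - h k * a k)"
      by (rule suminf_mult[OF summable_diff[OF s1 s0]])
    also have "\<dots> = c0 * ((\<Sum>k. h k * a (Suc k)) - (\<Sum>k. h k * a k))"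
      by (simp only: suminf_diff[OF s1 s0])
    finally have S: "(\<Sum>k. h k * a (Suc k)) = (\<Sum>k. h k * a k)"
      using c00 by simp
    have "(\<Sum>k. h (Suc k) * a (Suc k)) = (\<Sum>k. h k * a k) - h 0 * a 0"
      by (rule suminf_split_head[OF s0])
    then have S2: "(\<Sum>k. h (Suc k) * a (Suc k)) = (\<Sum>k. h k * a (Suc k))" using S a0 by simp
    have "(\<Sum>k. (h k - h (Suc k)) * a (Suc k)) = (\<Sum>k. h k * a (Suc k)) - (\<Sum>k. h (Suc k) * a (Suc k))"
      using suminf_diff[OF s1 s2] by (simp add: algebra_simps)
    also have "\<dots> = 0" using S2 by simp
    finally show ?thesis unfolding a_def .
  qed
  have bB: "cmod (h k - h (Suc k)) \<le> 2 * B" for k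
    using norm_triangle_ineq4[of "h k" "h (Suc k)"] hB[of k] hB[of "Suc k"] by linarith
  have step: "h k - h (Suc k) = 0" for k
    by (rule dirichlet_unique[where b="\<lambda>k. h k - h (Suc k)", OF bB dz])
  have const: "h k = h 0" for k
    by (induction k) (use step in auto)
  have ee: "(\<lambda>k. (cmod (h k))^2) = (\<lambda>k. (cmod (h 0))^2)" by (rule ext) (metis const)
  have "summable (\<lambda>k. (cmod (h 0))^2)" using h unfolding H2_iff ee .
  then have "h 0 = 0" by (simp add: summable_const_iff)
  then show ?thesis using const by simp
qed


theorem mainTheorem14:
  fixes n :: nat
  assumes "n \<ge> 2"
  shows "\<forall>f \<in> H2. \<forall>\<epsilon>>0. \<exists>A :: rat set. \<exists>c :: rat \<Rightarrow> complex. finite A \<and>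
           H2_norm (\<lambda>k. f k - (\<Sum>\<alpha>\<in>A. c \<alpha> * kappa (s_param n \<alpha>) k)) < \<epsilon>"
proof (intro ballI allI impI)
  fix f :: "nat \<Rightarrow> complex" and \<epsilon> :: real
  assume f: "f \<in> H2" and e: "\<epsilon> > 0"
  show "\<exists>A :: rat set. \<exists>c :: rat \<Rightarrow> complex. finite A \<and>
           H2_norm (\<lambda>k. f k - (\<Sum>\<alpha>\<in>A. c \<alpha> * kappa (s_param n \<alpha>) k)) < \<epsilon>"
  proof (rule ccontr)
    assume nex: "\<not> (\<exists>A :: rat set. \<exists>c :: rat \<Rightarrow> complex. finite A \<and>
           H2_norm (\<lambda>k. f k - (\<Sum>\<alpha>\<in>A. c \<alpha> * kappa (s_param n \<alpha>) k)) < \<epsilon>)"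
    define K where "K = (\<lambda>\<alpha>::rat. kappa (s_param n \<alpha>))"
    have KH: "\<And>\<alpha>. K \<alpha> \<in> H2" unfolding K_def by (rule kappa_H2)
    have far: "\<epsilon>^2 \<le> nrm (\<lambda>k. f k - v k)" if v: "v \<in> Vs K" for v
    proof -
      obtain A c where A: "finite A" "v = (\<lambda>k. \<Sum>\<alpha>\<in>A. c \<alpha> * K \<alpha> k)" using v unfolding Vs_def by blast
      have "\<not> H2_norm (\<lambda>k. f k - (\<Sum>\<alpha>\<in>A. c \<alpha> * kappa (s_param n \<alpha>) k)) < \<epsilon>" using nex A(1) by blast
      then have "\<epsilon> \<le> sqrt (nrm (\<lambda>k. f k - v k))" unfolding A(2) K_def H2_norm_def nrm_def by simp
      then have "\<epsilon>^2 \<le> (sqrt (nrm (\<lambda>k. f k - v k)))^2" using e by (intro power_mono) auto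
      also have "\<dots> = nrm (\<lambda>k. f k - v k)" using nrm_nonneg[OF H2_diff[OF f Vs_H2[OF KH v]]] by simp
      finally show ?thesis .
    qed
    have e2: "\<epsilon>^2 > 0" using e by simp
    obtain g where g: "g \<in> H2" "\<exists>k. g k \<noteq> 0" "\<forall>i. ip g (K i) = 0"
      using proj[of K, OF KH f e2 far] by blast
    define h where "h = (\<lambda>k. cnj (g k))"
    have hH: "h \<in> H2" unfolding h_def using g(1) by (simp add: H2_iff)
    have hz: "G h (cnj (s_param n \<alpha>)) = 0" for \<alpha>
    proof -
      have "cnj (ip g (K \<alpha>)) = (\<Sum>k. cnj (g k) * K \<alpha> k)" by (rule ip_cnj[OF g(1) KH])
      then show ?thesis using g(3) unfolding G_def h_def K_def kappa_def by simp
    qed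
    have "h k = 0" for k by (rule analytic_zero[OF assms hH hz])
    then show False using g(2) unfolding h_def by simp
  qed
qed


end
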